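(* Let $S$ and $R$ be two nodes joined by $h$ parallel undirected unit-capacity edges, and let $0\le k\le h$. Against a $k$-edge passive adversary, every $N$-round protocol by which $S$ securely sends a message $\mathcal{W}$ to $R$ satisfies $H(\mathcal{W})\le N(h-k)$, i.e. the secrecy rate is at most $h-k$.
   Context: Each use of an edge carries one symbol of a finite field $\mathbb{F}$; entropies in units of $\log|\mathbb{F}|$. $S$ and $R$ each have private randomness ($\mathcal{K}_S$, $\mathcal{K}_R$), mutually independent and independent of $\mathcal{W}$; there is no shared randomness. In each round each undirected edge carries one symbol in one direction, and transmissions depend causally on the sender's message/randomness and previously received symbols. Decodability: $R$ recovers $\mathcal{W}$ with zero error. Secrecy: $H(\mathcal{W}\mid\mathcal{V}_{\mathcal{A}})=H(\mathcal{W})$, where a $k$-edge adversary chooses any $k$ of the edges and $\mathcal{V}_{\mathcal{A}}$ is all values sent on them during the protocol; this must hold for every choice. Secrecy rate is $H(\mathcal{W})/N$. *)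

theory Defs
  imports "HOL-Probability.Probability"
begin

text \<open>Transcript of the public channel: value on edge e in round r (None = not yet sent /
  not an edge).  Both S and R are endpoints of every edge, so each sees the whole transcript.\<close>
type_synonym 'f trans = "nat \<Rightarrow> nat \<Rightarrow> 'f option"

text \<open>Transcript of the first t rounds of a protocol on h parallel edges.
  dir r e = True means edge e carries a symbol from S to R in round r.
  fS r e w ks H : symbol S sends (function of message, S's randomness and past transcript);
  fR r e kr H   : symbol R sends (function of R's randomness and past transcript).\<close>
primrec hist :: "nat \<Rightarrow> nat \<Rightarrow> (nat \<Rightarrow> nat \<Rightarrow> bool)
    \<Rightarrow> (nat \<Rightarrow> nat \<Rightarrow> 'w \<Rightarrow> 'a \<Rightarrow> 'f trans \<Rightarrow> 'f)
    \<Rightarrow> (nat \<Rightarrow> nat \<Rightarrow> 'b \<Rightarrow> 'f trans \<Rightarrow> 'f)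
    \<Rightarrow> 'w \<Rightarrow> 'a \<Rightarrow> 'b \<Rightarrow> 'f trans" where
  "hist 0 h dir fS fR w ks kr = (\<lambda>r e. None)"
| "hist (Suc t) h dir fS fR w ks kr =
     (let H = hist t h dir fS fR w ks kr in
      (\<lambda>r e. if r = t \<and> e < h then
                 Some (if dir t e then fS t e w ks H else fR t e kr H)
              else H r e))"

definition adv_view :: "nat set \<Rightarrow> 'f trans \<Rightarrow> 'f trans" where
  "adv_view A H = (\<lambda>r e. if e \<in> A then H r e else None)"

definition ent :: "real \<Rightarrow> 'o pmf \<Rightarrow> ('o \<Rightarrow> 'x) \<Rightarrow> real" where
  "ent b M X = - (\<Sum>x\<in>X ` set_pmf M.
       measure_pmf.prob M {\<omega>. X \<omega> = x} * log b (measure_pmf.prob M {\<omega>. X \<omega> = x}))"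

definition cent :: "real \<Rightarrow> 'o pmf \<Rightarrow> ('o \<Rightarrow> 'x) \<Rightarrow> ('o \<Rightarrow> 'y) \<Rightarrow> real" where
  "cent b M X Y = ent b M (\<lambda>\<omega>. (X \<omega>, Y \<omega>)) - ent b M Y"

end

theory Submission
  imports Defs
begin


lemma sf: "simple_function (measure_pmf (p::'o::finite pmf)) X"
  by (simp add: simple_function_def)

lemma ent_eq_H:
  fixes p :: "'o::finite pmf"
  assumes "information_space (measure_pmf p) b"
  shows "ent b p X = prob_space.entropy (measure_pmf p) b (count_space (X ` space (measure_pmf p))) X"
proof -
  have "prob_space.entropy (measure_pmf p) b (count_space (X ` space (measure_pmf p))) X =
    - (\<Sum>x\<in>X`space (measure_pmf p). measure_pmf.prob p (X -` {x} \<inter> space (measure_pmf p)) * log b (measure_pmf.prob p (X -` {x} \<inter> space (measure_pmf p))))"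
    by (rule information_space.entropy_simple_distributed[OF assms measure_pmf.simple_distributedI[OF sf measure_nonneg refl]])
  also have "\<dots> = - (\<Sum>x\<in>X`UNIV. measure_pmf.prob p {\<omega>. X \<omega> = x} * log b (measure_pmf.prob p {\<omega>. X \<omega> = x}))"
    by (simp add: vimage_def)
  also have "(\<Sum>x\<in>X`UNIV. measure_pmf.prob p {\<omega>. X \<omega> = x} * log b (measure_pmf.prob p {\<omega>. X \<omega> = x}))
     = (\<Sum>x\<in>X`set_pmf p. measure_pmf.prob p {\<omega>. X \<omega> = x} * log b (measure_pmf.prob p {\<omega>. X \<omega> = x}))"
  proof (rule sum.mono_neutral_right)
    show "\<forall>x\<in>X ` UNIV - X ` set_pmf p. measure_pmf.prob p {\<omega>. X \<omega> = x} * log b (measure_pmf.prob p {\<omega>. X \<omega> = x}) = 0"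
    proof
      fix x assume "x \<in> X ` UNIV - X ` set_pmf p"
      then have "{\<omega>. X \<omega> = x} \<inter> set_pmf p = {}" by (auto, metis image_eqI)
      then have "measure_pmf.prob p {\<omega>. X \<omega> = x} = 0" by (simp add: measure_pmf_zero_iff Int_commute)
      then show "measure_pmf.prob p {\<omega>. X \<omega> = x} * log b (measure_pmf.prob p {\<omega>. X \<omega> = x}) = 0" by simp
    qed
  qed auto
  finally show ?thesis unfolding ent_def by simp
qed

lemma ent_cong:
  assumes "\<forall>\<omega>\<in>set_pmf p. X \<omega> = Y \<omega>"
  shows "ent b p X = ent b p Y"
proof -
  have im: "X ` set_pmf p = Y ` set_pmf p" using assms by force
  have pr: "measure_pmf.prob p {\<omega>. X \<omega> = x} = measure_pmf.prob p {\<omega>. Y \<omega> = x}" for x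
  proof -
    have "{\<omega>. X \<omega> = x} \<inter> set_pmf p = {\<omega>. Y \<omega> = x} \<inter> set_pmf p" using assms by auto
    then show ?thesis by (metis measure_Int_set_pmf)
  qed
  show ?thesis unfolding ent_def im pr ..
qed



lemma hist_None: "hist t h dir fS fR w ks kr r e = None \<longleftrightarrow> \<not>(r < t \<and> e < h)"
  by (induction t arbitrary: r e) (auto simp: Let_def)

lemma hist_step_old: "r < t \<Longrightarrow> hist (Suc t) h dir fS fR w ks kr r e = hist t h dir fS fR w ks kr r e"
  by (simp add: Let_def)

lemma hist_ext: "r < t \<Longrightarrow> hist (t + d) h dir fS fR w ks kr r e = hist t h dir fS fR w ks kr r e"
  by (induction d) (auto simp: Let_def)

lemma hist_prefix:
  assumes "t \<le> N"
  shows "hist t h dir fS fR w ks kr = (\<lambda>r e. if r < t then hist N h dir fS fR w ks kr r e else None)"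
proof (intro ext)
  fix r e
  obtain d where N: "N = t + d" using assms le_Suc_ex by blast
  show "hist t h dir fS fR w ks kr r e = (if r < t then hist N h dir fS fR w ks kr r e else None)"
    using hist_ext[where r=r and t=t and d=d and h=h and dir=dir and fS=fS and fR=fR and w=w and ks=ks and kr=kr and e=e] hist_None[of t h dir fS fR w ks kr r e] N by auto
qed

lemma hist_rect:
  assumes eq: "hist N h dir fS fR w ks kr = hist N h dir fS fR w' ks' kr'"
  shows "t \<le> N \<Longrightarrow> hist t h dir fS fR w ks kr' = hist t h dir fS fR w ks kr"
proof (induction t)
  case 0 then show ?case by simp
next
  case (Suc t)
  then have IH: "hist t h dir fS fR w ks kr' = hist t h dir fS fR w ks kr" by simp
  have p1: "hist t h dir fS fR w ks kr = hist t h dir fS fR w' ks' kr'"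
    using hist_prefix[of t N h dir fS fR w ks kr] hist_prefix[of t N h dir fS fR w' ks' kr'] Suc.prems
    unfolding eq by simp
  have p2: "hist (Suc t) h dir fS fR w ks kr = hist (Suc t) h dir fS fR w' ks' kr'"
    using hist_prefix[of "Suc t" N h dir fS fR w ks kr] hist_prefix[of "Suc t" N h dir fS fR w' ks' kr'] Suc.prems
    unfolding eq by simp
  show ?case
  proof (intro ext)
    fix r e
    show "hist (Suc t) h dir fS fR w ks kr' r e = hist (Suc t) h dir fS fR w ks kr r e"
    proof (cases "r = t \<and> e < h \<and> \<not> dir t e")
      case True
      have "hist (Suc t) h dir fS fR w ks kr' r e = Some (fR t e kr' (hist t h dir fS fR w' ks' kr'))"
        using True IH p1 by (simp add: Let_def)
      also have "\<dots> = hist (Suc t) h dir fS fR w' ks' kr' r e" using True by (simp add: Let_def)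
      also have "\<dots> = hist (Suc t) h dir fS fR w ks kr r e" using p2 by simp
      finally show ?thesis .
    next
      case False
      then show ?thesis using IH by (auto simp: Let_def)
    qed
  qed
qed


lemma card_field_ge2: "2 \<le> card (UNIV :: ('f::{finite,field}) set)"
proof -
  have "card {0::'f, 1} = 2" by simp
  moreover have "card {0::'f, 1} \<le> card (UNIV :: 'f set)" by (rule card_mono) auto
  ultimately show ?thesis by simp
qed

theorem mainTheorem7:
  fixes h k N :: nat
    and pW :: "'w::finite pmf" and pKS :: "'a::finite pmf" and pKR :: "'b::finite pmf"
    and dir :: "nat \<Rightarrow> nat \<Rightarrow> bool"
    and fS :: "nat \<Rightarrow> nat \<Rightarrow> 'w \<Rightarrow> 'a \<Rightarrow> ('f::{finite,field}) trans \<Rightarrow> 'f"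
    and fR :: "nat \<Rightarrow> nat \<Rightarrow> 'b \<Rightarrow> 'f trans \<Rightarrow> 'f"
    and dec :: "'b \<Rightarrow> 'f trans \<Rightarrow> 'w"
  defines "\<Omega> \<equiv> pair_pmf pW (pair_pmf pKS pKR)"
    and "b \<equiv> real (card (UNIV :: 'f set))"
    and "T \<equiv> (\<lambda>\<omega>. hist N h dir fS fR (fst \<omega>) (fst (snd \<omega>)) (snd (snd \<omega>)))"
  assumes "k \<le> h"
    and decodable: "\<forall>\<omega>\<in>set_pmf \<Omega>. dec (snd (snd \<omega>)) (T \<omega>) = fst \<omega>"
    and secure: "\<forall>A. A \<subseteq> {..<h} \<and> card A = k \<longrightarrow>
                   cent b \<Omega> fst (\<lambda>\<omega>. adv_view A (T \<omega>)) = ent b \<Omega> fst"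
  shows "ent b \<Omega> fst \<le> real N * (real h - real k)"
proof -
  define c where "c = card (UNIV :: 'f set)"
  have c2: "2 \<le> c" unfolding c_def by (rule card_field_ge2)
  have b1: "1 < b" unfolding b_def c_def[symmetric] using c2 by simp
  have IS: "information_space (measure_pmf \<Omega>) b"
    by (intro information_space.intro prob_space_measure_pmf information_space_axioms.intro b1)
  interpret I: information_space "measure_pmf \<Omega>" b by (rule IS)
  define A where "A = {..<k}"
  have A: "A \<subseteq> {..<h}" "card A = k" unfolding A_def using \<open>k \<le> h\<close> by auto
  define V where "V = (\<lambda>\<omega>. adv_view A (T \<omega>))"
  define U where "U = (\<lambda>\<omega>. adv_view (- A) (T \<omega>))"
  define mrg where "mrg = (\<lambda>(u::'f trans) (v::'f trans) r e. if e \<in> A then v r e else u r e)"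
  have TUV: "T \<omega> = mrg (U \<omega>) (V \<omega>)" for \<omega>
    unfolding mrg_def U_def V_def adv_view_def by (auto simp: fun_eq_iff)
  define g where "g = (\<lambda>\<tau>. dec (SOME kr. \<exists>\<omega>\<in>set_pmf \<Omega>. snd (snd \<omega>) = kr \<and> T \<omega> = \<tau>) \<tau>)"
  have det: "fst \<omega> = g (T \<omega>)" if om: "\<omega> \<in> set_pmf \<Omega>" for \<omega>
  proof -
    obtain w ks kr where o: "\<omega> = (w, ks, kr)" by (cases \<omega>) auto
    define kr0 where "kr0 = (SOME kr. \<exists>\<omega>'\<in>set_pmf \<Omega>. snd (snd \<omega>') = kr \<and> T \<omega>' = T \<omega>)"
    have "\<exists>\<omega>'\<in>set_pmf \<Omega>. snd (snd \<omega>') = kr0 \<and> T \<omega>' = T \<omega>"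
      unfolding kr0_def by (rule someI_ex) (use om in blast)
    then obtain w' ks' where o': "(w', ks', kr0) \<in> set_pmf \<Omega>" and Teq: "T (w', ks', kr0) = T \<omega>"
      by force
    have sup: "set_pmf \<Omega> = set_pmf pW \<times> set_pmf pKS \<times> set_pmf pKR"
      unfolding \<Omega>_def by (simp add: set_pair_pmf)
    have mix: "(w, ks, kr0) \<in> set_pmf \<Omega>" using om o' o sup by auto
    have "hist N h dir fS fR w ks kr = hist N h dir fS fR w' ks' kr0"
      using Teq o unfolding T_def by simp
    then have "hist N h dir fS fR w ks kr0 = hist N h dir fS fR w ks kr"
      by (rule hist_rect) simp
    then have Tm: "T (w, ks, kr0) = T \<omega>" unfolding T_def o by simp
    have "dec kr0 (T (w, ks, kr0)) = w" using decodable mix by force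
    then show ?thesis unfolding g_def kr0_def[symmetric] using Tm o by simp
  qed
  have E0: "ent b \<Omega> fst = ent b \<Omega> (\<lambda>\<omega>. (fst \<omega>, V \<omega>)) - ent b \<Omega> V"
    using secure A unfolding cent_def V_def by auto
  have E1: "ent b \<Omega> (\<lambda>\<omega>. (fst \<omega>, V \<omega>)) = ent b \<Omega> (\<lambda>\<omega>. (g (T \<omega>), V \<omega>))"
    by (rule ent_cong) (auto simp: det)
  define F where "F = (\<lambda>(v, u). (g (mrg u v), v))"
  have E2: "(\<lambda>\<omega>. (g (T \<omega>), V \<omega>)) = F \<circ> (\<lambda>\<omega>. (V \<omega>, U \<omega>))"
    unfolding F_def by (auto simp: fun_eq_iff TUV[symmetric])
  let ?H = "\<lambda>X. prob_space.entropy (measure_pmf \<Omega>) b (count_space (X ` space (measure_pmf \<Omega>))) X"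
  have E3: "ent b \<Omega> (\<lambda>\<omega>. (g (T \<omega>), V \<omega>)) \<le> ent b \<Omega> (\<lambda>\<omega>. (V \<omega>, U \<omega>))"
    unfolding E2 ent_eq_H[OF IS] by (rule I.entropy_data_processing[OF sf])
  have E4: "ent b \<Omega> (\<lambda>\<omega>. (V \<omega>, U \<omega>)) \<le> ent b \<Omega> V + ent b \<Omega> U"
    unfolding ent_eq_H[OF IS] I.entropy_chain_rule[OF sf sf]
    using I.conditional_entropy_less_eq_entropy[OF sf sf, of U V] by simp
  have E5: "ent b \<Omega> U \<le> log b (real (card (U ` UNIV)))"
    unfolding ent_eq_H[OF IS]
    using I.entropy_le_card[OF measure_pmf.simple_distributedI[OF sf measure_nonneg refl], of U] by simp
  define J where "J = {..<N} \<times> ({..<h} - A)"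
  define emb where "emb = (\<lambda>(G :: nat \<times> nat \<Rightarrow> 'f) (r::nat) (e::nat). if (r, e) \<in> J then Some (G (r, e)) else None)"
  have Uemb: "U \<omega> = emb (restrict (\<lambda>(r, e). the (T \<omega> r e)) J)" for \<omega>
  proof (intro ext)
    fix r e
    have "T \<omega> r e = None \<longleftrightarrow> \<not> (r < N \<and> e < h)" unfolding T_def by (rule hist_None)
    then show "U \<omega> r e = emb (restrict (\<lambda>(r, e). the (T \<omega> r e)) J) r e"
      unfolding U_def emb_def J_def adv_view_def by (cases "T \<omega> r e") auto
  qed
  have sub: "U ` UNIV \<subseteq> emb ` (J \<rightarrow>\<^sub>E (UNIV :: 'f set))"
    using Uemb by auto
  have finJ: "finite J" unfolding J_def by simp
  have cardJ: "card J = N * (h - k)"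
    unfolding J_def using A by (simp add: card_cartesian_product card_Diff_subset finite_subset)
  have "card (U ` UNIV) \<le> card (emb ` (J \<rightarrow>\<^sub>E (UNIV :: 'f set)))"
    by (rule card_mono[OF _ sub]) (simp add: finJ finite_PiE)
  also have "\<dots> \<le> card (J \<rightarrow>\<^sub>E (UNIV :: 'f set))" by (rule card_image_le) (simp add: finJ finite_PiE)
  also have "\<dots> = c ^ (N * (h - k))" using finJ cardJ by (simp add: card_PiE c_def)
  finally have cardU: "card (U ` UNIV) \<le> c ^ (N * (h - k))" .
  have "log b (real (card (U ` UNIV))) \<le> log b (real (c ^ (N * (h - k))))"
  proof -
    have "0 < card (U ` UNIV)" by (simp add: card_gt_0_iff)
    moreover have "0 < c ^ (N * (h - k))" using c2 by simp
    ultimately show ?thesis using cardU b1 by (subst log_le_cancel_iff) auto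
  qed
  also have "\<dots> = real (N * (h - k))"
    using b1 by (simp add: b_def c_def[symmetric] log_nat_power)
  also have "\<dots> = real N * (real h - real k)" using \<open>k \<le> h\<close> by (simp add: of_nat_diff)
  finally have E6: "log b (real (card (U ` UNIV))) \<le> real N * (real h - real k)" .
  show ?thesis using E0 E1 E3 E4 E5 E6 by linarith
qed

end
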